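(* Let $N\ge2$, $\lambda>0$, $\mu\in\mathbb R$, $\sigma>0$. Let $\Delta S_1\sim\mathcal N(\mu,\sigma^2)$ and $\hat\mu\sim\mathcal N(\mu,\sigma^2/N)$ be independent, and let $a_{\mathrm{plug\text{-}in}}:=\hat\mu/(\lambda\sigma^2)$. Then \[ \mathrm{MeanVar}_\lambda\big(a_{\mathrm{plug\text{-}in}}\,\Delta S_1\big)=\frac{\mu^2}{2\lambda\sigma^2}-\frac{\mu^2+\sigma^2}{2N\lambda\sigma^2}. \]
   Context: $\mathrm{MeanVar}_\lambda(X):=\mathbb E[X]-\frac\lambda2\mathbb V[X]$, with expectation and variance under the joint law of $(\hat\mu,\Delta S_1)$. Here $\hat\mu$ plays the role of the sample-mean drift estimate from $N$ past i.i.d. $\mathcal N(\mu,\sigma^2)$ increments and $\Delta S_1$ is the next increment; $a_{\mathrm{plug\text{-}in}}$ is the plug-in investment amount for the entropic objective when the variance is assumed known. *)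

theory Defs
  imports "HOL-Probability.Probability"
begin

definition MeanVar :: "'a measure \<Rightarrow> real \<Rightarrow> ('a \<Rightarrow> real) \<Rightarrow> real" where
  "MeanVar M lam X =
     prob_space.expectation M X - lam / 2 * prob_space.variance M X"

end

theory Submission
  imports Defs
begin

lemma normal_sq_facts:
  fixes X :: "'a \<Rightarrow> real"
  assumes P: "prob_space M" and s: "s > 0"
    and D: "distributed M lborel X (normal_density m s)"
  shows "integrable M X" "integrable M (\<lambda>x. (X x)\<^sup>2)"
    "prob_space.expectation M X = m"
    "prob_space.expectation M (\<lambda>x. (X x)\<^sup>2) = s\<^sup>2 + m\<^sup>2"
proof -
  interpret prob_space M by (rule P)
  show i1: "integrable M X"
    using distributed_integrable_var[OF D _ integrable_normal_moment_nz_1[OF s]] by simp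
  have "integrable lborel (\<lambda>x. normal_density m s x * (x - m)^2 + 2 * m * (normal_density m s x * x) - m\<^sup>2 * normal_density m s x)"
    using integrable_normal_moment[OF s, of m 2] integrable_normal_moment_nz_1[OF s, of m] integrable_normal_density[OF s, of m]
    by (intro Bochner_Integration.integrable_diff Bochner_Integration.integrable_add integrable_mult_right) auto
  also have "(\<lambda>x. normal_density m s x * (x - m)^2 + 2 * m * (normal_density m s x * x) - m\<^sup>2 * normal_density m s x) = (\<lambda>x. normal_density m s x * x\<^sup>2)"
    by (rule ext) (simp add: power2_eq_square algebra_simps)
  finally have "integrable lborel (\<lambda>x. normal_density m s x * x\<^sup>2)" .
  then show i2: "integrable M (\<lambda>x. (X x)\<^sup>2)"
    using distributed_integrable[OF D, of "\<lambda>x. x\<^sup>2"] by simp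
  show e: "expectation X = m" by (rule normal_distributed_expectation[OF s D])
  have "variance X = s\<^sup>2" by (rule normal_distributed_variance[OF s D])
  then show "expectation (\<lambda>x. (X x)\<^sup>2) = s\<^sup>2 + m\<^sup>2"
    using variance_eq[OF i1 i2] e by simp
qed

theorem lemmaB3:
  fixes M :: "'a measure" and N :: nat and lam mu sigma :: real
    and dS muhat :: "'a \<Rightarrow> real"
  assumes "prob_space M"
    and "N \<ge> 2" and "lam > 0" and "sigma > 0"
    and "distributed M lborel dS (normal_density mu sigma)"
    and "distributed M lborel muhat (normal_density mu (sigma / sqrt (real N)))"
    and "prob_space.indep_var M borel dS borel muhat"
  shows "MeanVar M lam (\<lambda>\<omega>. (muhat \<omega> / (lam * sigma\<^sup>2)) * dS \<omega>) =
           mu\<^sup>2 / (2 * lam * sigma\<^sup>2) - (mu\<^sup>2 + sigma\<^sup>2) / (2 * real N * lam * sigma\<^sup>2)"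
proof -
  interpret prob_space M by (rule assms(1))
  have sN: "sigma / sqrt (real N) > 0" using assms by simp
  note A = normal_sq_facts[OF assms(1) assms(4) assms(5)]
  note B = normal_sq_facts[OF assms(1) sN assms(6)]
  have ind2: "indep_var borel (\<lambda>x. (dS x)\<^sup>2) borel (\<lambda>x. (muhat x)\<^sup>2)"
    using indep_var_compose[OF assms(7), of "\<lambda>x. x\<^sup>2" borel "\<lambda>x. x\<^sup>2" borel]
    by (simp add: comp_def)
  define c where "c = 1 / (lam * sigma\<^sup>2)"
  have f: "(\<lambda>\<omega>. (muhat \<omega> / (lam * sigma\<^sup>2)) * dS \<omega>) = (\<lambda>\<omega>. c * (dS \<omega> * muhat \<omega>))"
    by (auto simp: c_def)
  have i1: "integrable M (\<lambda>\<omega>. dS \<omega> * muhat \<omega>)"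
    by (rule indep_var_integrable[OF assms(7) A(1) B(1)])
  have e1: "expectation (\<lambda>\<omega>. dS \<omega> * muhat \<omega>) = mu * mu"
    using indep_var_lebesgue_integral[OF assms(7) A(1) B(1)] A(3) B(3) by simp
  have i2: "integrable M (\<lambda>\<omega>. (dS \<omega>)\<^sup>2 * (muhat \<omega>)\<^sup>2)"
    by (rule indep_var_integrable[OF ind2 A(2) B(2)])
  have e2: "expectation (\<lambda>\<omega>. (dS \<omega>)\<^sup>2 * (muhat \<omega>)\<^sup>2) = (sigma\<^sup>2 + mu\<^sup>2) * ((sigma / sqrt (real N))\<^sup>2 + mu\<^sup>2)"
    using indep_var_lebesgue_integral[OF ind2 A(2) B(2)] A(4) B(4) by simp
  have sq: "(\<lambda>\<omega>. (c * (dS \<omega> * muhat \<omega>))\<^sup>2) = (\<lambda>\<omega>. c\<^sup>2 * ((dS \<omega>)\<^sup>2 * (muhat \<omega>)\<^sup>2))"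
    by (auto simp: power_mult_distrib)
  have ic: "integrable M (\<lambda>\<omega>. c * (dS \<omega> * muhat \<omega>))" using i1 by simp
  have ic2: "integrable M (\<lambda>\<omega>. (c * (dS \<omega> * muhat \<omega>))\<^sup>2)" unfolding sq using i2 by simp
  have E: "expectation (\<lambda>\<omega>. c * (dS \<omega> * muhat \<omega>)) = c * mu\<^sup>2"
    using e1 by (simp add: power2_eq_square)
  have E2: "expectation (\<lambda>\<omega>. (c * (dS \<omega> * muhat \<omega>))\<^sup>2) = c\<^sup>2 * ((sigma\<^sup>2 + mu\<^sup>2) * (sigma\<^sup>2 / real N + mu\<^sup>2))"
    unfolding sq using e2 assms by (simp add: power_divide)
  have V: "variance (\<lambda>\<omega>. c * (dS \<omega> * muhat \<omega>)) = c\<^sup>2 * ((sigma\<^sup>2 + mu\<^sup>2) * (sigma\<^sup>2 / real N + mu\<^sup>2)) - (c * mu\<^sup>2)\<^sup>2"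
    using variance_eq[OF ic ic2] E E2 by (simp only:)
  have Npos: "real N > 0" using assms by simp
  show ?thesis
    unfolding MeanVar_def f V unfolding E c_def using Npos assms(3,4) e1
    by (simp add: field_simps power2_eq_square)
qed

end
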